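(* Let $q>1$, $\Omega$ any domain of $\mathbb{R}^N$, $T\in(0,\infty]$, and $u$ a nonnegative classical solution of (E) in $Q_{\Omega,T}$ such that $u(\cdot,t)\to\infty$ uniformly on a ball $B(x_0,\rho)$ with $\overline{B(x_0,\rho)}\subset\Omega$, as $t\to0$. Then $$\liminf_{t\to0}t^{\frac1{q-1}}u(x,t)\ge C(N,q,\rho)>0\quad\forall x\in B(x_0,\rho/2),\qquad \liminf_{t\to0}t^{\frac1{q-1}}u(x_0,t)\ge C_q\rho^{q'},$$ where $q'=q/(q-1)$ and $C_q=\big((q'(1+q'))^q(q-1)\big)^{-\frac1{q-1}}$.
   Context: Equation (E) is $u_t-\Delta u+|\nabla u|^q=0$ in $Q_{\Omega,T}=\Omega\times(0,T)$; a classical solution is $u\in C^{2,1}(Q_{\Omega,T})$ satisfying (E) pointwise. *)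

theory Defs
  imports "HOL-Analysis.Analysis"
begin

definition Qcyl :: "(real^('n::finite)) set \<Rightarrow> ereal \<Rightarrow> ((real^'n) \<times> real) set" where
  "Qcyl \<Omega> T = {(x,t). x \<in> \<Omega> \<and> 0 < t \<and> ereal t < T}"

text \<open>Classical solution of u_t - Laplace u + |grad u|^q = 0 in Q_{Omega,T}:
  u is C^{2,1} in Q (u, its spatial gradient Du, spatial Hessian D2u and time derivative ut
  exist and are jointly continuous in Q) and the equation holds pointwise.\<close>
definition classical_solution_E ::
  "real \<Rightarrow> (real^('n::finite)) set \<Rightarrow> ereal \<Rightarrow> (real^'n \<Rightarrow> real \<Rightarrow> real) \<Rightarrow> bool" where
  "classical_solution_E q \<Omega> T u \<longleftrightarrow>
     (\<exists>(Du :: real^'n \<Rightarrow> real \<Rightarrow> real^'n) (D2u :: real^'n \<Rightarrow> real \<Rightarrow> real^'n^'n)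
        (ut :: real^'n \<Rightarrow> real \<Rightarrow> real).
       (\<forall>(x,t) \<in> Qcyl \<Omega> T.
          ((\<lambda>y. u y t) has_derivative (\<lambda>h. Du x t \<bullet> h)) (at x) \<and>
          ((\<lambda>y. Du y t) has_derivative (\<lambda>h. D2u x t *v h)) (at x) \<and>
          ((\<lambda>s. u x s) has_real_derivative ut x t) (at t) \<and>
          ut x t - (\<Sum>i\<in>UNIV. D2u x t $ i $ i) + norm (Du x t) powr q = 0) \<and>
       continuous_on (Qcyl \<Omega> T) (\<lambda>(x,t). u x t) \<and>
       continuous_on (Qcyl \<Omega> T) (\<lambda>(x,t). Du x t) \<and>
       continuous_on (Qcyl \<Omega> T) (\<lambda>(x,t). D2u x t) \<and>
       continuous_on (Qcyl \<Omega> T) (\<lambda>(x,t). ut x t))"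

end

theory Submission
  imports Defs
begin


lemma second_order_1d:
  fixes f f' :: "real \<Rightarrow> real"
  assumes d: "d > 0" and mx: "\<And>s. \<bar>s\<bar> < d \<Longrightarrow> f s \<le> f 0"
    and der: "\<And>s. \<bar>s\<bar> < d \<Longrightarrow> (f has_real_derivative f' s) (at s)"
    and der2: "(f' has_real_derivative L) (at 0)"
  shows "f' 0 = 0 \<and> L \<le> 0"
proof -
  have z: "f' 0 = 0"
    by (rule DERIV_local_max[OF der[of 0] d]) (use d mx in auto)
  moreover have "L \<le> 0"
  proof (rule ccontr)
    assume "\<not> L \<le> 0"
    then have "L > 0" by simp
    from DERIV_pos_inc_right[OF der2 this] obtain e where e: "e > 0" "\<And>h. h > 0 \<Longrightarrow> h < e \<Longrightarrow> f' 0 < f' (0 + h)"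
      by blast
    define h where "h = min e d / 2"
    have h: "h > 0" "h < e" "h < d" using e d by (auto simp: h_def)
    have "\<exists>z. 0 < z \<and> z < h \<and> f h - f 0 = (h - 0) * f' z"
      by (rule MVT2) (use h in \<open>auto intro!: der\<close>)
    then obtain z where "0 < z" "z < h" "f h - f 0 = h * f' z" by auto
    moreover have "f' z > 0" using e(2)[of z] \<open>0 < z\<close> \<open>z < h\<close> h z by auto
    ultimately have "f h > f 0" using h by (simp add: algebra_simps)
    with mx[of h] h show False by auto
  qed
  ultimately show ?thesis by simp
qed

lemma left_max_deriv:
  fixes f :: "real \<Rightarrow> real"
  assumes d: "d > 0" and mx: "\<And>s. t - d < s \<Longrightarrow> s < t \<Longrightarrow> f s \<le> f t"
    and der: "(f has_real_derivative L) (at t)"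
  shows "L \<ge> 0"
proof (rule ccontr)
  assume "\<not> L \<ge> 0"
  then have "L < 0" by simp
  from DERIV_neg_dec_left[OF der this] obtain e where e: "e > 0" "\<And>h. h > 0 \<Longrightarrow> h < e \<Longrightarrow> f t < f (t - h)"
    by blast
  define h where "h = min e d / 2"
  have h: "h > 0" "h < e" "h < d" using e d by (auto simp: h_def)
  then show False using e(2)[of h] mx[of "t - h"] by auto
qed

lemma norm_line_sq:
  fixes h :: "real^'n"
  shows "(norm (h + s *\<^sub>R axis i 1))\<^sup>2 = (norm h)\<^sup>2 + 2 * s * h $ i + s\<^sup>2"
proof -
  have "(norm (h + s *\<^sub>R axis i 1))\<^sup>2 = (h + s *\<^sub>R axis i 1) \<bullet> (h + s *\<^sub>R axis i 1)"
    by (simp add: power2_norm_eq_inner)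
  also have "\<dots> = h \<bullet> h + 2 * s * (h \<bullet> axis i 1) + s\<^sup>2 * (axis i (1::real) \<bullet> axis i 1)"
    by (simp add: inner_add_left inner_add_right inner_commute power2_eq_square algebra_simps)
  also have "\<dots> = (norm h)\<^sup>2 + 2 * s * h $ i + s\<^sup>2"
    by (simp add: inner_axis power2_norm_eq_inner inner_axis_axis)
  finally show ?thesis .
qed



definition gfun :: "real \<Rightarrow> real^'n \<Rightarrow> real^'n \<Rightarrow> real" where
  "gfun \<rho> x0 y = \<rho>\<^sup>2 - (norm (y - x0))\<^sup>2"

definition psi :: "real \<Rightarrow> real \<Rightarrow> real \<Rightarrow> real^'n \<Rightarrow> real^'n \<Rightarrow> real" where
  "psi q \<rho> A x0 y = A * gfun \<rho> x0 y powr (q/(q-1))"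

definition gradpsi :: "real \<Rightarrow> real \<Rightarrow> real \<Rightarrow> real^'n \<Rightarrow> real^'n \<Rightarrow> real^'n" where
  "gradpsi q \<rho> A x0 y = (-2*A*(q/(q-1)) * gfun \<rho> x0 y powr (q/(q-1) - 1)) *\<^sub>R (y - x0)"

definition hessii :: "real \<Rightarrow> real \<Rightarrow> real \<Rightarrow> real^'n \<Rightarrow> real^'n \<Rightarrow> 'n \<Rightarrow> real" where
  "hessii q \<rho> A x0 y i = 4*A*(q/(q-1))*(q/(q-1)-1) * gfun \<rho> x0 y powr (q/(q-1) - 2) * ((y - x0)$i)\<^sup>2
     - 2*A*(q/(q-1)) * gfun \<rho> x0 y powr (q/(q-1) - 1)"

lemma gfun_line: "gfun \<rho> x0 (x + s *\<^sub>R axis i 1) = gfun \<rho> x0 x - 2 * s * (x - x0) $ i - s\<^sup>2"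
proof -
  have "x + s *\<^sub>R axis i 1 - x0 = (x - x0) + s *\<^sub>R axis i 1" by simp
  then show ?thesis unfolding gfun_def using norm_line_sq[of "x - x0" s i] by (simp add: algebra_simps)
qed

lemma psi_line:
  assumes "gfun \<rho> x0 (x + s *\<^sub>R axis i 1) > 0"
  shows "((\<lambda>s. psi q \<rho> A x0 (x + s *\<^sub>R axis i 1)) has_real_derivative
           gradpsi q \<rho> A x0 (x + s *\<^sub>R axis i 1) $ i) (at s)"
proof -
  define c where "c = gfun \<rho> x0 x"
  define h where "h = (x - x0) $ i"
  define b where "b = q/(q-1)"
  have eq: "(\<lambda>s. psi q \<rho> A x0 (x + s *\<^sub>R axis i 1)) = (\<lambda>s. A * (c - 2 * s * h - s\<^sup>2) powr b)"
    by (simp add: psi_def gfun_line c_def h_def b_def)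
  have pos: "c - 2 * s * h - s\<^sup>2 > 0" using assms by (simp add: gfun_line c_def h_def)
  have "((\<lambda>s. A * (c - 2 * s * h - s\<^sup>2) powr b) has_real_derivative
          A * (b * (c - 2 * s * h - s\<^sup>2) powr (b - 1) * (- 2 * h - 2 * s))) (at s)"
    by (rule derivative_eq_intros refl | use pos in simp)+
  moreover have comp: "(x + s *\<^sub>R axis i 1 - x0) $ i = h + s" by (simp add: h_def)
  moreover have "gradpsi q \<rho> A x0 (x + s *\<^sub>R axis i 1) $ i = A * (b * (c - 2 * s * h - s\<^sup>2) powr (b - 1) * (- 2 * h - 2 * s))"
    unfolding gradpsi_def vector_scaleR_component comp gfun_line b_def[symmetric] c_def[symmetric] h_def[symmetric] real_scaleR_def
    by (simp add: algebra_simps)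
  ultimately show ?thesis using eq by simp
qed

lemma gradpsi_line:
  assumes "gfun \<rho> x0 x > 0"
  shows "((\<lambda>s. gradpsi q \<rho> A x0 (x + s *\<^sub>R axis i 1) $ i) has_real_derivative
           hessii q \<rho> A x0 x i) (at 0)"
proof -
  define c where "c = gfun \<rho> x0 x"
  define h where "h = (x - x0) $ i"
  define b where "b = q/(q-1)"
  have comp: "\<And>s. (x + s *\<^sub>R axis i 1 - x0) $ i = h + s" by (simp add: h_def)
  have eq: "(\<lambda>s. gradpsi q \<rho> A x0 (x + s *\<^sub>R axis i 1) $ i) = (\<lambda>s. -2*A*b * (c - 2 * s * h - s\<^sup>2) powr (b - 1) * (h + s))"
    unfolding gradpsi_def vector_scaleR_component comp gfun_line b_def[symmetric] c_def[symmetric] h_def[symmetric] real_scaleR_def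
    by simp
  have pos: "c - 2 * 0 * h - 0\<^sup>2 > 0" using assms by (simp add: c_def)
  have "((\<lambda>s. -2*A*b * (c - 2 * s * h - s\<^sup>2) powr (b - 1) * (h + s)) has_real_derivative
          -2*A*b * ((b - 1) * (c - 2 * 0 * h - 0\<^sup>2) powr (b - 1 - 1) * (- 2 * h - 2 * 0)) * (h + 0)
          + -2*A*b * (c - 2 * 0 * h - 0\<^sup>2) powr (b - 1) * 1) (at 0)"
    by (rule derivative_eq_intros refl | use pos in simp)+
  moreover have "hessii q \<rho> A x0 x i = -2*A*b * ((b - 1) * (c - 2 * 0 * h - 0\<^sup>2) powr (b - 1 - 1) * (- 2 * h - 2 * 0)) * (h + 0)
          + -2*A*b * (c - 2 * 0 * h - 0\<^sup>2) powr (b - 1) * 1"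
  proof -
    have bb: "b - 1 - 1 = b - 2" by simp
    show ?thesis unfolding hessii_def b_def[symmetric] c_def[symmetric] h_def[symmetric] bb
      by (simp add: power2_eq_square algebra_simps)
  qed
  ultimately show ?thesis using eq by simp
qed



lemma quad_ineq:
  fixes \<kappa> c D G \<theta> \<rho> :: real
  assumes "\<kappa> > 0" "c > 0" "D \<ge> c" "G > 0" "G \<le> \<rho>\<^sup>2" "\<theta> > 0" "\<theta> \<le> \<kappa>*c*\<rho>\<^sup>2/D\<^sup>2"
  shows "- \<kappa>*G\<^sup>2 - \<theta>*c*(\<rho>\<^sup>2 - G) + (D - c)*\<theta>*G \<le> 0"
proof -
  have Dp: "D > 0" using assms by simp
  show ?thesis
  proof (cases "G \<le> c*\<rho>\<^sup>2/D")
    case True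
    then have "D*G \<le> c*\<rho>\<^sup>2" using Dp by (simp add: field_simps)
    then have "\<theta>*(D*G) \<le> \<theta>*(c*\<rho>\<^sup>2)" using assms by (intro mult_left_mono) auto
    moreover have "\<kappa>*G\<^sup>2 \<ge> 0" using assms by simp
    ultimately show ?thesis by (simp add: algebra_simps)
  next
    case False
    then have g: "G*D > c*\<rho>\<^sup>2" using Dp by (simp add: field_simps)
    have "\<theta>*D\<^sup>2 \<le> \<kappa>*c*\<rho>\<^sup>2" using assms(7) Dp by (simp add: field_simps)
    also have "\<dots> \<le> \<kappa>*(G*D)" using g assms by simp
    finally have "\<theta>*D*D \<le> \<kappa>*G*D" by (simp add: power2_eq_square algebra_simps)
    then have "\<theta>*D \<le> \<kappa>*G" using Dp by simp
    then have "\<theta>*D*G \<le> \<kappa>*G*G" using assms by (intro mult_right_mono) auto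
    moreover have "\<theta>*c*\<rho>\<^sup>2 \<ge> 0" using assms by simp
    ultimately show ?thesis by (simp add: power2_eq_square algebra_simps)
  qed
qed

lemma key_real:
  fixes A b p q \<kappa> \<theta> G r \<rho> N c D :: real
  assumes q: "q > 1" and A: "A > 0" and b: "b = q/(q-1)" and p: "p = 1/(q-1)"
    and \<kappa>: "\<kappa> = p - A powr (q-1) * (2*b) powr q * \<rho> powr q" "\<kappa> > 0"
    and G: "G > 0" and r: "r \<ge> 0" "r\<^sup>2 = \<rho>\<^sup>2 - G" and \<rho>: "\<rho> > 0"
    and \<theta>: "\<theta> > 0" "\<theta> \<le> \<kappa>*c*\<rho>\<^sup>2/D\<^sup>2" and c: "c = 4*b*(b-1)" and D: "D = 2*N*b + c" and N: "N \<ge> 0"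
  shows "-p*(A*G powr b) + (2*A*b*G powr (b-1)*r) powr q
          - \<theta>*(4*A*b*(b-1)*G powr (b-2)*r\<^sup>2 - 2*N*A*b*G powr (b-1)) \<le> 0"
proof -
  have b1: "b - 1 = p" using q by (simp add: b p field_simps)
  have pp: "p > 0" using q by (simp add: p)
  have bpos: "b > 0" using b1 pp by simp
  have cpos: "c > 0" using bpos pp b1 by (simp add: c)
  have Dc: "D \<ge> c" using N bpos by (simp add: D)
  define P where "P = G powr b"
  have Ppos: "P > 0" using G by (simp add: P_def)
  have G1: "G powr (b-1) = P / G" using G by (simp add: P_def powr_diff)
  have G2: "G powr (b-2) = P / G\<^sup>2" using G by (simp add: P_def powr_diff powr_numeral)
  have pq: "(b-1)*q = b" using q by (simp add: b field_simps)
  define K where "K = A powr (q-1) * (2*b) powr q"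
  have Kpos: "K \<ge> 0" by (simp add: K_def)
  have rle: "r \<le> \<rho>" using r G \<rho> by (smt (verit) power_mono)
  have R: "r powr q \<le> \<rho> powr q" using rle r q by (intro powr_mono2) auto
  have T2: "(2*A*b*G powr (b-1)*r) powr q = A * K * P * r powr q"
  proof -
    have "(2*A*b*G powr (b-1)*r) powr q = (A * (2*b) * G powr (b-1) * r) powr q" by (simp add: algebra_simps)
    also have "\<dots> = A powr q * (2*b) powr q * (G powr (b-1)) powr q * r powr q"
      using A bpos G r by (simp add: powr_mult)
    also have "(G powr (b-1)) powr q = P" using pq by (simp add: powr_powr P_def)
    also have "A powr q = A * A powr (q-1)" using A by (simp add: powr_diff)
    finally show ?thesis by (simp add: K_def algebra_simps)
  qed
  have KR: "K * r powr q \<le> p - \<kappa>" using R Kpos by (simp add: \<kappa> K_def[symmetric] mult_left_mono)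
  have main: "- \<kappa>*G\<^sup>2 - \<theta>*c*(\<rho>\<^sup>2 - G) + (D - c)*\<theta>*G \<le> 0"
    using quad_ineq[OF \<kappa>(2) cpos Dc G _ \<theta>] r zero_le_power2[of r] by simp
  have eq: "-p*(A*G powr b) + (2*A*b*G powr (b-1)*r) powr q
          - \<theta>*(4*A*b*(b-1)*G powr (b-2)*r\<^sup>2 - 2*N*A*b*G powr (b-1))
        = (A*P/G\<^sup>2) * (G\<^sup>2*(-p + K * r powr q) - \<theta>*c*r\<^sup>2 + (D - c)*\<theta>*G)"
    unfolding T2 unfolding G1 G2 P_def[symmetric] using G by (simp add: c D field_simps power2_eq_square)
  have "G\<^sup>2*(-p + K * r powr q) \<le> G\<^sup>2 * (-\<kappa>)" using KR by (intro mult_left_mono) auto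
  then have "G\<^sup>2*(-p + K * r powr q) - \<theta>*c*r\<^sup>2 + (D - c)*\<theta>*G \<le> 0"
  proof -
    have "\<theta>*c*\<rho>\<^sup>2 = \<theta>*c*G + \<theta>*c*r\<^sup>2" by (simp add: r(2) algebra_simps)
    then show ?thesis using main \<open>G\<^sup>2*(-p + K * r powr q) \<le> G\<^sup>2 * (-\<kappa>)\<close>
      by (simp add: algebra_simps)
  qed
  moreover have "A*P/G\<^sup>2 > 0" using A Ppos G by simp
  ultimately show ?thesis unfolding eq by (metis less_eq_real_def mult_nonneg_nonpos)
qed



definition theta0 :: "real \<Rightarrow> real \<Rightarrow> real \<Rightarrow> real \<Rightarrow> real" where
  "theta0 q \<rho> A N = (let b = q/(q-1); p = 1/(q-1); \<kappa> = p - A powr (q-1) * (2*b) powr q * \<rho> powr q;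
     c = 4*b*(b-1); D = 2*N*b + c in \<kappa>*c*\<rho>\<^sup>2/D\<^sup>2)"

lemma sum_sq_norm: "(\<Sum>i\<in>UNIV. ((h::real^'n) $ i)\<^sup>2) = (norm h)\<^sup>2"
proof -
  have "(norm h)\<^sup>2 = h \<bullet> h" by (simp add: dot_square_norm)
  also have "\<dots> = (\<Sum>i\<in>UNIV. (h $ i)\<^sup>2)" by (simp add: inner_vec_def power2_eq_square)
  finally show ?thesis by simp
qed

lemma key_vec:
  fixes x x0 :: "real^'n"
  assumes q: "q > 1" and A: "A > 0" and \<rho>: "\<rho> > 0"
    and \<kappa>: "1/(q-1) - A powr (q-1) * (2*(q/(q-1))) powr q * \<rho> powr q > 0"
    and G: "gfun \<rho> x0 x > 0"
    and \<theta>: "\<theta> > 0" "\<theta> \<le> theta0 q \<rho> A (real CARD('n))"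
  shows "-(1/(q-1)) * psi q \<rho> A x0 x + norm (gradpsi q \<rho> A x0 x) powr q
          - \<theta> * (\<Sum>i\<in>UNIV. hessii q \<rho> A x0 x i) \<le> 0"
proof -
  define b where "b = q/(q-1)"
  define p where "p = 1/(q-1)"
  define N where "N = real CARD('n)"
  define Gv where "Gv = gfun \<rho> x0 x"
  define r where "r = norm (x - x0)"
  have b1: "b - 1 > 0" using q by (simp add: b_def field_simps)
  have nrm: "norm (gradpsi q \<rho> A x0 x) = 2*A*b*Gv powr (b-1)*r"
    using A b1 q by (simp add: gradpsi_def b_def[symmetric] Gv_def[symmetric] r_def abs_mult)
  have hs: "(\<Sum>i\<in>UNIV. hessii q \<rho> A x0 x i) = 4*A*b*(b-1)*Gv powr (b-2)*r\<^sup>2 - 2*N*A*b*Gv powr (b-1)"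
  proof -
    define \<alpha> where "\<alpha> = 4*A*b*(b-1)*Gv powr (b-2)"
    define \<beta> where "\<beta> = 2*A*b*Gv powr (b-1)"
    have "\<And>i. hessii q \<rho> A x0 x i = \<alpha> * ((x-x0)$i)\<^sup>2 - \<beta>"
      unfolding hessii_def b_def[symmetric] Gv_def[symmetric] \<alpha>_def \<beta>_def by simp
    then have "(\<Sum>i\<in>UNIV. hessii q \<rho> A x0 x i) = \<alpha> * (\<Sum>i\<in>UNIV. ((x-x0)$i)\<^sup>2) - N * \<beta>"
      by (simp only: sum_subtractf sum_distrib_left[symmetric] sum_constant N_def)
    also have "\<dots> = \<alpha> * r\<^sup>2 - N * \<beta>" by (simp only: sum_sq_norm r_def)
    finally show ?thesis by (simp add: \<alpha>_def \<beta>_def algebra_simps)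
  qed
  have "-p*(A*Gv powr b) + (2*A*b*Gv powr (b-1)*r) powr q
          - \<theta>*(4*A*b*(b-1)*Gv powr (b-2)*r\<^sup>2 - 2*N*A*b*Gv powr (b-1)) \<le> 0"
  proof (rule key_real[OF q A b_def p_def refl _ _ _ _ \<rho> \<theta>(1) _ refl refl])
    show "0 < p - A powr (q - 1) * (2 * b) powr q * \<rho> powr q" using \<kappa> by (simp add: p_def b_def)
    show "Gv > 0" using G by (simp add: Gv_def)
    show "r \<ge> 0" by (simp add: r_def)
    show "r\<^sup>2 = \<rho>\<^sup>2 - Gv" by (simp add: r_def Gv_def gfun_def)
    show "N \<ge> 0" by (simp add: N_def)
    show "\<theta> \<le> (p - A powr (q - 1) * (2 * b) powr q * \<rho> powr q) * (4 * b * (b - 1)) * \<rho>\<^sup>2 /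
      (2 * N * b + 4 * b * (b - 1))\<^sup>2" using \<theta>(2) by (simp add: theta0_def Let_def b_def p_def N_def)
  qed
  then show ?thesis by (simp add: nrm hs psi_def b_def[symmetric] p_def[symmetric] Gv_def[symmetric])
qed



lemma psi_cont: assumes "q > 1" shows "continuous_on (cball x0 \<rho>) (psi q \<rho> A x0)"
proof -
  have "continuous_on (cball x0 \<rho>) (\<lambda>y. A * gfun \<rho> x0 y powr (q/(q-1)))"
  proof (intro continuous_on_mult[OF continuous_on_const] continuous_on_powr'[OF _ continuous_on_const])
    show "continuous_on (cball x0 \<rho>) (gfun \<rho> x0)" unfolding gfun_def by (intro continuous_intros)
    show "\<forall>y\<in>cball x0 \<rho>. 0 \<le> gfun \<rho> x0 y \<and> (gfun \<rho> x0 y = 0 \<longrightarrow> 0 < q/(q-1))"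
      using assms by (auto simp: gfun_def dist_norm norm_minus_commute intro!: power_mono)
  qed
  then show ?thesis by (simp add: psi_def[abs_def])
qed

lemma gfun_pos: "dist x0 x < \<rho> \<Longrightarrow> gfun \<rho> x0 x > 0"
  unfolding gfun_def dist_norm by (simp add: norm_minus_commute power_strict_mono)

lemma psi_sphere: "q > 1 \<Longrightarrow> dist x0 x = \<rho> \<Longrightarrow> psi q \<rho> A x0 x = 0"
  unfolding psi_def gfun_def dist_norm by (simp add: norm_minus_commute)



lemma u_line:
  assumes "((\<lambda>y. u y t) has_derivative (\<lambda>h. Du \<bullet> h)) (at (xs + s *\<^sub>R axis i 1))"
  shows "((\<lambda>s. u (xs + s *\<^sub>R axis i (1::real)) t) has_real_derivative (Du::real^'n) $ i) (at s)"
proof -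
  have L: "((\<lambda>s. xs + s *\<^sub>R axis i (1::real)) has_derivative (\<lambda>h. h *\<^sub>R axis i 1)) (at s)"
    by (auto intro!: derivative_eq_intros)
  have "((\<lambda>y. u y t) \<circ> (\<lambda>s. xs + s *\<^sub>R axis i 1) has_derivative (\<lambda>h. Du \<bullet> h) \<circ> (\<lambda>h. h *\<^sub>R axis i 1)) (at s)"
    by (rule diff_chain_at[OF L assms])
  moreover have "(\<lambda>h. Du \<bullet> h) \<circ> (\<lambda>h. h *\<^sub>R axis i 1) = (*) (Du $ i)"
    by (auto simp: inner_axis)
  ultimately show ?thesis by (simp add: has_field_derivative_def comp_def)
qed

lemma Du_line:
  assumes "((\<lambda>y. Du y t) has_derivative (\<lambda>h. M *v h)) (at xs)"
  shows "((\<lambda>s. (Du (xs + s *\<^sub>R axis i (1::real)) t :: real^'n) $ i) has_real_derivative M $ i $ i) (at 0)"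
proof -
  have L: "((\<lambda>s. xs + s *\<^sub>R axis i (1::real)) has_derivative (\<lambda>h. h *\<^sub>R axis i 1)) (at 0)"
    by (auto intro!: derivative_eq_intros)
  have A: "((\<lambda>y. Du y t) has_derivative (\<lambda>h. M *v h)) (at ((\<lambda>s. xs + s *\<^sub>R axis i (1::real)) 0))"
    using assms by simp
  have "((\<lambda>y. Du y t) \<circ> (\<lambda>s. xs + s *\<^sub>R axis i 1) has_derivative (\<lambda>h. M *v h) \<circ> (\<lambda>h. h *\<^sub>R axis i 1)) (at 0)"
    by (rule diff_chain_at[OF L A])
  then have "((\<lambda>s. ((\<lambda>y. Du y t) \<circ> (\<lambda>s. xs + s *\<^sub>R axis i 1)) s $ i) has_derivative (\<lambda>h. ((\<lambda>h. M *v h) \<circ> (\<lambda>h. h *\<^sub>R axis i 1)) h $ i)) (at 0)"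
    by (rule bounded_linear.has_derivative[OF bounded_linear_vec_nth])
  moreover have "(\<lambda>h. ((\<lambda>h. M *v h) \<circ> (\<lambda>h. h *\<^sub>R axis i 1)) h $ i) = (*) (M $ i $ i)"
    by (auto simp: matrix_vector_mult_scaleR matrix_vector_mult_basis column_def mult.commute)
  ultimately show ?thesis by (simp add: has_field_derivative_def comp_def)
qed



lemma comparison:
  fixes u :: "real^'n \<Rightarrow> real \<Rightarrow> real" and x0 :: "real^'n"
  assumes sol: "classical_solution_E q \<Omega> T u"
    and nonneg: "\<forall>(x,t)\<in>Qcyl \<Omega> T. u x t \<ge> 0"
    and sub: "cball x0 \<rho> \<subseteq> \<Omega>"
    and q: "q > 1" and \<rho>: "\<rho> > 0" and A: "A > 0"
    and \<kappa>: "1/(q-1) - A powr (q-1) * (2*(q/(q-1))) powr q * \<rho> powr q > 0"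
    and \<tau>: "\<tau> > 0" "\<tau> \<le> t2" "ereal t2 < T"
    and a: "\<tau> + a > 0" "t2 + a \<le> theta0 q \<rho> A (real CARD('n))"
    and init: "\<forall>x\<in>cball x0 \<rho>. (\<tau>+a) powr (-(1/(q-1))) * psi q \<rho> A x0 x \<le> u x \<tau>"
  shows "\<forall>x\<in>cball x0 \<rho>. \<forall>t\<in>{\<tau>..t2}. (t+a) powr (-(1/(q-1))) * psi q \<rho> A x0 x \<le> u x t"
proof -
  define p where "p = 1/(q-1)"
  have pp: "p > 0" using q by (simp add: p_def)
  have pq: "p * q = p + 1" using q by (simp add: p_def field_simps)
  from sol obtain Du D2u ut where
    S: "\<forall>(x,t) \<in> Qcyl \<Omega> T.
          ((\<lambda>y. u y t) has_derivative (\<lambda>h. Du x t \<bullet> h)) (at x) \<and>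
          ((\<lambda>y. Du y t) has_derivative (\<lambda>h. D2u x t *v h)) (at x) \<and>
          ((\<lambda>s. u x s) has_real_derivative ut x t) (at t) \<and>
          ut x t - (\<Sum>i\<in>UNIV. D2u x t $ i $ i) + norm (Du x t) powr q = 0"
    and cu: "continuous_on (Qcyl \<Omega> T) (\<lambda>(x,t). u x t)"
    unfolding classical_solution_E_def by blast
  define K where "K = cball x0 \<rho> \<times> {\<tau>..t2}"
  have KQ: "K \<subseteq> Qcyl \<Omega> T"
  proof
    fix y assume "y \<in> K"
    then obtain x t where y: "y = (x,t)" "x \<in> cball x0 \<rho>" "\<tau> \<le> t" "t \<le> t2" by (auto simp: K_def)
    have "ereal t < T" using y \<tau> by (meson ereal_less_eq(3) order.strict_trans1)
    then show "y \<in> Qcyl \<Omega> T" using y sub \<tau> by (auto simp: Qcyl_def)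
  qed
  define W where "W = (\<lambda>x t. (t+a) powr (-p) * psi q \<rho> A x0 x)"
  have claim: "\<forall>y\<in>K. (\<lambda>(x,t). W x t - u x t - \<epsilon>*(t-\<tau>)) y \<le> 0" if \<epsilon>: "\<epsilon> > 0" for \<epsilon>
  proof -
    define z where "z = (\<lambda>(x,t). W x t - u x t - \<epsilon>*(t-\<tau>))"
    have cz: "continuous_on K z"
    proof -
      have c1: "continuous_on K (\<lambda>y. u (fst y) (snd y))"
        using continuous_on_subset[OF cu KQ] by (simp add: split_def)
      have c2: "continuous_on K (\<lambda>y. psi q \<rho> A x0 (fst y))"
        by (rule continuous_on_compose2[OF psi_cont[OF q] continuous_on_fst]) (auto simp: K_def)
      have c3: "continuous_on K (\<lambda>y. (snd y + a) powr (-p))"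
        by (intro continuous_intros) (use a in \<open>auto simp: K_def\<close>)
      have "continuous_on K (\<lambda>y. (snd y + a) powr (-p) * psi q \<rho> A x0 (fst y) - u (fst y) (snd y) - \<epsilon>*(snd y - \<tau>))"
        by (intro continuous_intros c1 c2 c3)
      then show ?thesis by (simp add: z_def W_def split_def)
    qed
    have Kc: "compact K" unfolding K_def by (intro compact_Times) auto
    have Kne: "K \<noteq> {}" using \<rho> \<tau> by (auto simp: K_def)
    obtain m where m: "m \<in> K" "\<And>y. y \<in> K \<Longrightarrow> z y \<le> z m"
      using continuous_attains_sup[OF Kc Kne cz] by blast
    obtain xs ts where mxt: "m = (xs, ts)" by (cases m)
    have xsK: "xs \<in> cball x0 \<rho>" and tsK: "\<tau> \<le> ts" "ts \<le> t2" using m(1) by (auto simp: mxt K_def)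
    have mQ: "(xs, ts) \<in> Qcyl \<Omega> T" using KQ m(1) mxt by auto
    have "z m \<le> 0"
    proof (rule ccontr)
      assume "\<not> z m \<le> 0"
      then have zpos: "z (xs,ts) > 0" by (simp add: mxt)
      have xin: "dist x0 xs < \<rho>"
      proof (rule ccontr)
        assume "\<not> dist x0 xs < \<rho>"
        then have "dist x0 xs = \<rho>" using xsK by simp
        then have "psi q \<rho> A x0 xs = 0" using psi_sphere q by blast
        moreover have "u xs ts \<ge> 0" using nonneg mQ by auto
        moreover have "0 \<le> \<epsilon>*(ts-\<tau>)" using tsK \<epsilon> by simp
        moreover have "z (xs,ts) = (ts+a) powr (-p) * psi q \<rho> A x0 xs - u xs ts - \<epsilon>*(ts-\<tau>)" by (simp add: z_def W_def)
        ultimately show False using zpos by simp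
      qed
      have tin: "\<tau> < ts"
      proof (rule ccontr)
        assume "\<not> \<tau> < ts"
        then have "ts = \<tau>" using tsK by simp
        then show False using zpos init xsK by (fastforce simp: z_def W_def p_def)
      qed
      define \<theta> where "\<theta> = ts + a"
      have \<theta>: "\<theta> > 0" "\<theta> \<le> theta0 q \<rho> A (real CARD('n))" using a tsK by (auto simp: \<theta>_def)
      have Gp: "gfun \<rho> x0 xs > 0" using gfun_pos[OF xin] .
      define d where "d = \<rho> - dist x0 xs"
      have dpos: "d > 0" using xin by (simp add: d_def)
      have lineK: "dist x0 (xs + s *\<^sub>R axis i 1) < \<rho>" if "\<bar>s\<bar> < d" for s i
      proof -
        have "dist x0 (xs + s *\<^sub>R axis i 1) \<le> dist x0 xs + norm (s *\<^sub>R axis i (1::real))"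
          by (metis dist_norm dist_triangle2 add_diff_cancel_left' norm_minus_commute)
        then show ?thesis using that by (simp add: d_def)
      qed
      have lineQ: "(xs + s *\<^sub>R axis i 1, ts) \<in> K" if "\<bar>s\<bar> < d" for s i
        using lineK[OF that, of i] tsK by (auto simp: K_def)
      have SQ: "\<And>x t. (x,t) \<in> K \<Longrightarrow>
          ((\<lambda>y. u y t) has_derivative (\<lambda>h. Du x t \<bullet> h)) (at x) \<and>
          ((\<lambda>y. Du y t) has_derivative (\<lambda>h. D2u x t *v h)) (at x) \<and>
          ((\<lambda>s. u x s) has_real_derivative ut x t) (at t) \<and>
          ut x t - (\<Sum>i\<in>UNIV. D2u x t $ i $ i) + norm (Du x t) powr q = 0"
        using S KQ by blast
      have coord: "\<theta> powr (-p) * gradpsi q \<rho> A x0 xs $ i = Du xs ts $ i \<and>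
                   \<theta> powr (-p) * hessii q \<rho> A x0 xs i \<le> D2u xs ts $ i $ i" for i
      proof -
        define f where "f = (\<lambda>s. z (xs + s *\<^sub>R axis i 1, ts))"
        define f' where "f' = (\<lambda>s. \<theta> powr (-p) * gradpsi q \<rho> A x0 (xs + s *\<^sub>R axis i 1) $ i
                                    - Du (xs + s *\<^sub>R axis i 1) ts $ i)"
        have fe: "f = (\<lambda>s. \<theta> powr (-p) * psi q \<rho> A x0 (xs + s *\<^sub>R axis i 1) - u (xs + s *\<^sub>R axis i 1) ts - \<epsilon>*(ts-\<tau>))"
          by (simp add: f_def z_def W_def \<theta>_def)
        have mx: "f s \<le> f 0" if "\<bar>s\<bar> < d" for s
          using m(2)[OF lineQ[OF that]] by (simp add: f_def mxt)
        have der: "(f has_real_derivative f' s) (at s)" if "\<bar>s\<bar> < d" for s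
        proof -
          have g: "gfun \<rho> x0 (xs + s *\<^sub>R axis i 1) > 0" using gfun_pos[OF lineK[OF that]] .
          have ud: "((\<lambda>s. u (xs + s *\<^sub>R axis i 1) ts) has_real_derivative Du (xs + s *\<^sub>R axis i 1) ts $ i) (at s)"
            by (rule u_line) (use SQ[OF lineQ[OF that]] in blast)
          have "((\<lambda>s. \<theta> powr (-p) * psi q \<rho> A x0 (xs + s *\<^sub>R axis i 1) - u (xs + s *\<^sub>R axis i 1) ts - \<epsilon>*(ts-\<tau>))
                 has_real_derivative \<theta> powr (-p) * gradpsi q \<rho> A x0 (xs + s *\<^sub>R axis i 1) $ i
                    - Du (xs + s *\<^sub>R axis i 1) ts $ i - 0) (at s)"
            by (intro DERIV_diff DERIV_cmult psi_line g ud DERIV_const)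
          then show ?thesis by (simp add: fe f'_def)
        qed
        have der2: "(f' has_real_derivative \<theta> powr (-p) * hessii q \<rho> A x0 xs i - D2u xs ts $ i $ i) (at 0)"
        proof -
          have "((\<lambda>s. (Du (xs + s *\<^sub>R axis i (1::real)) ts :: real^'n) $ i) has_real_derivative D2u xs ts $ i $ i) (at 0)"
            by (rule Du_line) (use SQ[OF m(1)[unfolded mxt]] in blast)
          then show ?thesis unfolding f'_def
            by (intro DERIV_diff DERIV_cmult gradpsi_line Gp)
        qed
        from second_order_1d[OF dpos mx der der2] show ?thesis by (simp add: f'_def)
      qed
      have DuEq: "Du xs ts = \<theta> powr (-p) *\<^sub>R gradpsi q \<rho> A x0 xs"
        using coord by (simp add: vec_eq_iff)
      have sumle: "\<theta> powr (-p) * (\<Sum>i\<in>UNIV. hessii q \<rho> A x0 xs i) \<le> (\<Sum>i\<in>UNIV. D2u xs ts $ i $ i)"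
        unfolding sum_distrib_left by (intro sum_mono) (use coord in blast)
      have nq: "norm (Du xs ts) powr q = \<theta> powr (-p-1) * norm (gradpsi q \<rho> A x0 xs) powr q"
      proof -
        have "norm (Du xs ts) powr q = (\<theta> powr (-p) * norm (gradpsi q \<rho> A x0 xs)) powr q"
          using \<theta> by (simp add: DuEq)
        also have "\<dots> = (\<theta> powr (-p)) powr q * norm (gradpsi q \<rho> A x0 xs) powr q"
          using \<theta> by (simp add: powr_mult)
        also have "(\<theta> powr (-p)) powr q = \<theta> powr (-p-1)" using pq by (simp add: powr_powr)
        finally show ?thesis .
      qed
      have eqn: "ut xs ts - (\<Sum>i\<in>UNIV. D2u xs ts $ i $ i) + norm (Du xs ts) powr q = 0"
        using SQ[OF m(1)[unfolded mxt]] by blast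
      have key: "-p * psi q \<rho> A x0 xs + norm (gradpsi q \<rho> A x0 xs) powr q
          - \<theta> * (\<Sum>i\<in>UNIV. hessii q \<rho> A x0 xs i) \<le> 0"
        using key_vec[OF q A \<rho> \<kappa> Gp \<theta>] by (simp add: p_def)
      have key2: "\<theta> powr (-p-1) * (-p * psi q \<rho> A x0 xs) + \<theta> powr (-p-1) * norm (gradpsi q \<rho> A x0 xs) powr q
          - \<theta> powr (-p) * (\<Sum>i\<in>UNIV. hessii q \<rho> A x0 xs i) \<le> 0"
      proof -
        have tt: "\<theta> powr (-p-1) * \<theta> = \<theta> powr (-p)"
        proof -
          have "\<theta> powr (-p-1) * \<theta> = \<theta> powr (-p-1) * \<theta> powr 1" using \<theta> by simp
          also have "\<dots> = \<theta> powr (-p-1+1)" by (simp only: powr_add)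
          finally show ?thesis by simp
        qed
        have "\<theta> powr (-p-1) * (-p * psi q \<rho> A x0 xs + norm (gradpsi q \<rho> A x0 xs) powr q
          - \<theta> * (\<Sum>i\<in>UNIV. hessii q \<rho> A x0 xs i)) \<le> 0"
          using key \<theta> by (simp add: mult_nonneg_nonpos)
        moreover have "\<theta> powr (-p-1) * (-p * psi q \<rho> A x0 xs + norm (gradpsi q \<rho> A x0 xs) powr q
          - \<theta> * (\<Sum>i\<in>UNIV. hessii q \<rho> A x0 xs i)) = \<theta> powr (-p-1) * (-p * psi q \<rho> A x0 xs) + \<theta> powr (-p-1) * norm (gradpsi q \<rho> A x0 xs) powr q
          - (\<theta> powr (-p-1) * \<theta>) * (\<Sum>i\<in>UNIV. hessii q \<rho> A x0 xs i)"
          by (simp only: ring_distribs mult.assoc)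
        ultimately show ?thesis unfolding tt by linarith
      qed
      define g where "g = (\<lambda>t. z (xs, t))"
      have ge: "g = (\<lambda>t. (t+a) powr (-p) * psi q \<rho> A x0 xs - u xs t - \<epsilon>*(t-\<tau>))"
        by (simp add: g_def z_def W_def)
      have gder: "(g has_real_derivative (-p) * \<theta> powr (-p-1) * psi q \<rho> A x0 xs - ut xs ts - \<epsilon>) (at ts)"
      proof -
        have ud: "((\<lambda>s. u xs s) has_real_derivative ut xs ts) (at ts)"
          using SQ[OF m(1)[unfolded mxt]] by blast
        have "((\<lambda>t. (t+a) powr (-p) * psi q \<rho> A x0 xs - u xs t - \<epsilon>*(t-\<tau>)) has_real_derivative
              (-p) * (ts+a) powr (-p-1) * 1 * psi q \<rho> A x0 xs - ut xs ts - \<epsilon>*(1-0)) (at ts)"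
        proof (intro DERIV_diff DERIV_cmult_right ud)
          show "((\<lambda>t. (t+a) powr (-p)) has_real_derivative (-p) * (ts+a) powr (-p-1) * 1) (at ts)"
            using \<theta>(1) unfolding \<theta>_def by (intro derivative_eq_intros refl) (auto simp: algebra_simps)
          show "((\<lambda>t. \<epsilon>*(t-\<tau>)) has_real_derivative \<epsilon>*(1-0)) (at ts)"
            by (intro derivative_eq_intros refl) auto
        qed
        then show ?thesis by (simp add: ge \<theta>_def)
      qed
      have gmax: "g s \<le> g ts" if "ts - (ts - \<tau>) < s" "s < ts" for s
        using m(2)[of "(xs,s)"] that xsK tsK by (simp add: g_def mxt K_def)
      have "(-p) * \<theta> powr (-p-1) * psi q \<rho> A x0 xs - ut xs ts - \<epsilon> \<ge> 0"
        by (rule left_max_deriv[where d="ts - \<tau>", OF _ _ gder]) (use tin gmax in auto)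
      moreover have "\<theta> powr (-p-1) * (-p * psi q \<rho> A x0 xs) = (-p) * \<theta> powr (-p-1) * psi q \<rho> A x0 xs"
        by (simp only: mult_ac)
      ultimately show False using eqn nq key2 sumle \<epsilon> by linarith
    qed
    then show ?thesis using m(2) by (fastforce simp: z_def)
  qed
  show ?thesis
  proof (intro ballI)
    fix x t assume x: "x \<in> cball x0 \<rho>" and t: "t \<in> {\<tau>..t2}"
    have xt: "(x,t) \<in> K" using x t by (simp add: K_def)
    show "(t+a) powr (-(1/(q-1))) * psi q \<rho> A x0 x \<le> u x t"
    proof (rule ccontr)
      assume "\<not> ?thesis"
      then have \<delta>: "W x t - u x t > 0" by (simp add: W_def p_def)
      define \<epsilon> where "\<epsilon> = (W x t - u x t) / (t2 - \<tau> + 1)"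
      have ep: "\<epsilon> > 0" using \<delta> \<tau> by (simp add: \<epsilon>_def)
      have "W x t - u x t - \<epsilon>*(t-\<tau>) \<le> 0" using claim[OF ep] xt by auto
      moreover have "\<epsilon>*(t-\<tau>) < W x t - u x t"
      proof -
        have "\<epsilon>*(t-\<tau>) \<le> \<epsilon>*(t2-\<tau>)" using ep t by (intro mult_left_mono) auto
        also have "\<dots> < \<epsilon>*(t2-\<tau>+1)" using ep by simp
        also have "\<dots> = W x t - u x t" using \<tau> by (simp add: \<epsilon>_def)
        finally show ?thesis .
      qed
      ultimately show False by simp
    qed
  qed
qed



lemma main_bound:
  fixes u :: "real^'n \<Rightarrow> real \<Rightarrow> real" and x0 :: "real^'n" and T :: ereal
  assumes sol: "classical_solution_E q \<Omega> T u"
    and nonneg: "\<forall>(x,t)\<in>Qcyl \<Omega> T. u x t \<ge> 0"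
    and sub: "cball x0 \<rho> \<subseteq> \<Omega>"
    and q: "q > 1" and \<rho>: "\<rho> > 0" and A: "A > 0" and T: "T > 0"
    and \<kappa>: "1/(q-1) - A powr (q-1) * (2*(q/(q-1))) powr q * \<rho> powr q > 0"
    and blow: "\<forall>M. eventually (\<lambda>t. \<forall>x \<in> ball x0 \<rho>. u x t \<ge> M) (at_right 0)"
    and x: "x \<in> ball x0 \<rho>"
  shows "eventually (\<lambda>t. psi q \<rho> A x0 x \<le> t powr (1/(q-1)) * u x t) (at_right 0)"
proof -
  define p where "p = 1/(q-1)"
  define b where "b = q/(q-1)"
  have pp: "p > 0" using q by (simp add: p_def)
  have bp: "b > 0" using q by (simp add: b_def)
  define \<theta>0 where "\<theta>0 = theta0 q \<rho> A (real CARD('n))"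
  have \<theta>0: "\<theta>0 > 0"
  proof -
    have b1: "b - 1 > 0" using q by (simp add: b_def field_simps)
    have c: "4*b*(b-1) > 0" using b1 bp by simp
    have D: "2 * real CARD('n) * b + 4*b*(b-1) > 0" using c bp by (simp add: add_nonneg_pos)
    have k: "1/(q-1) - A powr (q-1) * (2*b) powr q * \<rho> powr q > 0" using \<kappa> by (simp add: b_def)
    show ?thesis unfolding \<theta>0_def theta0_def Let_def b_def[symmetric]
      using k c D \<rho> bp b1 by (intro divide_pos_pos mult_pos_pos) auto
  qed
  obtain z :: ereal where z: "0 < z" "z < T" using T dense by blast
  define t2 where "t2 = min (\<theta>0/2) (real_of_ereal z)"
  have zr: "z = ereal (real_of_ereal z)" using z by (cases z) auto
  have t2: "t2 > 0" "ereal t2 < T" "t2 \<le> \<theta>0/2"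
  proof -
    have "real_of_ereal z > 0" using z zr by (metis ereal_less(2))
    then show "t2 > 0" using \<theta>0 by (simp add: t2_def)
    have "ereal t2 \<le> z" using zr by (metis min.cobounded2 ereal_less_eq(3) t2_def)
    then show "ereal t2 < T" using z by simp
    show "t2 \<le> \<theta>0/2" by (simp add: t2_def)
  qed
  define Pm where "Pm = A * (\<rho>\<^sup>2) powr b"
  have psile: "psi q \<rho> A x0 y \<le> Pm" if "y \<in> cball x0 \<rho>" for y
  proof -
    have "0 \<le> gfun \<rho> x0 y" "gfun \<rho> x0 y \<le> \<rho>\<^sup>2"
      using that \<rho> by (auto simp: gfun_def dist_norm norm_minus_commute intro!: power_mono)
    then show ?thesis unfolding psi_def Pm_def b_def[symmetric] using A bp
      by (simp add: powr_mono2)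
  qed
  have psinn: "psi q \<rho> A x0 y \<ge> 0" for y using A by (simp add: psi_def)
  have pt: "t powr (-p) * psi q \<rho> A x0 x \<le> u x t" if t: "0 < t" "t \<le> t2" for t
  proof (rule ccontr)
    assume "\<not> ?thesis"
    then have lt: "u x t < t powr (-p) * psi q \<rho> A x0 x" by simp
    have "((\<lambda>s. (t+s) powr (-p) * psi q \<rho> A x0 x) \<longlongrightarrow> (t+0) powr (-p) * psi q \<rho> A x0 x) (at_right 0)"
      using t by (intro tendsto_intros) auto
    then have "eventually (\<lambda>s. u x t < (t+s) powr (-p) * psi q \<rho> A x0 x) (at_right 0)"
      using lt by (intro order_tendstoD) auto
    then obtain e where e: "e > 0" "\<And>s. s > 0 \<Longrightarrow> s < e \<Longrightarrow> u x t < (t+s) powr (-p) * psi q \<rho> A x0 x"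
      unfolding eventually_at_right_field by auto
    define s where "s = min e (\<theta>0/2) / 2"
    have s: "s > 0" "s < e" "s \<le> \<theta>0/2" using e \<theta>0 by (auto simp: s_def)
    have us: "u x t < (t+s) powr (-p) * psi q \<rho> A x0 x" using e(2) s by auto
    obtain d where d: "d > 0" "\<And>\<tau>. \<tau> > 0 \<Longrightarrow> \<tau> < d \<Longrightarrow> \<forall>y\<in>ball x0 \<rho>. u y \<tau> \<ge> s powr (-p) * Pm"
      using blow[rule_format, of "s powr (-p) * Pm"] unfolding eventually_at_right_field by auto
    define \<tau> where "\<tau> = min d t / 2"
    have \<tau>: "\<tau> > 0" "\<tau> < d" "\<tau> < t" "\<tau> \<le> t2" using d t by (auto simp: \<tau>_def)
    have init: "\<forall>y\<in>cball x0 \<rho>. (\<tau> + (s - \<tau>)) powr (-(1/(q-1))) * psi q \<rho> A x0 y \<le> u y \<tau>"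
    proof
      fix y assume y: "y \<in> cball x0 \<rho>"
      show "(\<tau> + (s - \<tau>)) powr (-(1/(q-1))) * psi q \<rho> A x0 y \<le> u y \<tau>"
      proof (cases "dist x0 y < \<rho>")
        case True
        have "s powr (-p) * psi q \<rho> A x0 y \<le> s powr (-p) * Pm"
          using psile[OF y] by (intro mult_left_mono) auto
        also have "\<dots> \<le> u y \<tau>" using d(2)[OF \<tau>(1,2)] True by auto
        finally show ?thesis by (simp add: p_def)
      next
        case False
        then have "dist x0 y = \<rho>" using y by simp
        then have "psi q \<rho> A x0 y = 0" using psi_sphere q by blast
        moreover have "(y, \<tau>) \<in> Qcyl \<Omega> T"
        proof -
          have "ereal \<tau> < T" using \<tau> t2 by (meson ereal_less_eq(3) order.strict_trans1)
          then show ?thesis using y sub \<tau> by (auto simp: Qcyl_def)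
        qed
        ultimately show ?thesis using nonneg by auto
      qed
    qed
    have "\<forall>x\<in>cball x0 \<rho>. \<forall>t\<in>{\<tau>..t2}. (t + (s - \<tau>)) powr (-(1/(q-1))) * psi q \<rho> A x0 x \<le> u x t"
      by (rule comparison[OF sol nonneg sub q \<rho> A \<kappa> \<tau>(1) \<tau>(4) t2(2) _ _ init])
         (use s \<tau> t2 in \<open>auto simp: \<theta>0_def\<close>)
    then have c: "(t + (s - \<tau>)) powr (-p) * psi q \<rho> A x0 x \<le> u x t"
      using x \<tau> t by (auto simp: p_def)
    have "(t+s) powr (-p) \<le> (t + (s - \<tau>)) powr (-p)"
      using \<tau> s t pp by (intro powr_mono2') auto
    then have "(t+s) powr (-p) * psi q \<rho> A x0 x \<le> (t + (s - \<tau>)) powr (-p) * psi q \<rho> A x0 x"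
      using psinn by (intro mult_right_mono) auto
    then show False using c us by simp
  qed
  show ?thesis unfolding eventually_at_right_field
  proof (intro exI[of _ t2] conjI allI impI)
    show "t2 > 0" by (rule t2(1))
    fix t :: real assume "t > 0" "t < t2"
    then have h: "t powr (-p) * psi q \<rho> A x0 x \<le> u x t" using pt by auto
    have "t powr p * (t powr (-p) * psi q \<rho> A x0 x) \<le> t powr p * u x t"
      using h by (intro mult_left_mono) auto
    moreover have "t powr p * t powr (-p) = 1" using \<open>t > 0\<close> by (simp add: powr_minus)
    ultimately show "psi q \<rho> A x0 x \<le> t powr (1/(q-1)) * u x t"
      by (simp add: p_def mult.assoc[symmetric])
  qed
qed



theorem proposition3p5:
  fixes q \<rho> :: real
  assumes "q > 1" and "\<rho> > 0"
  shows "\<exists>C > 0. \<forall>(\<Omega> :: (real^'n::finite) set) (T :: ereal) (u :: real^'n \<Rightarrow> real \<Rightarrow> real) (x0 :: real^'n).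
    open \<Omega> \<and> connected \<Omega> \<and> T > 0 \<and>
    classical_solution_E q \<Omega> T u \<and>
    (\<forall>(x,t) \<in> Qcyl \<Omega> T. u x t \<ge> 0) \<and>
    cball x0 \<rho> \<subseteq> \<Omega> \<and>
    (\<forall>M. eventually (\<lambda>t. \<forall>x \<in> ball x0 \<rho>. u x t \<ge> M) (at_right 0))
    \<longrightarrow>
    (\<forall>x \<in> ball x0 (\<rho>/2).
       Liminf (at_right 0) (\<lambda>t. ereal (t powr (1/(q-1)) * u x t)) \<ge> ereal C) \<and>
    Liminf (at_right 0) (\<lambda>t. ereal (t powr (1/(q-1)) * u x0 t))
      \<ge> ereal (((((q/(q-1)) * (1 + q/(q-1))) powr q * (q-1)) powr (-(1/(q-1)))) * \<rho> powr (q/(q-1)))"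
proof -
  note q = assms(1) and \<rho> = assms(2)
  define b where "b = q/(q-1)"
  define p where "p = 1/(q-1)"
  have bp: "b > 0" using q by (simp add: b_def)
  have b1: "b > 1" using q by (simp add: b_def field_simps)
  have pp: "p > 0" using q by (simp add: p_def)
  define Y where "Y = (b * (1 + b)) powr q * (q-1)"
  have Yp: "Y > 0" using bp q by (simp add: Y_def)
  define Cq where "Cq = Y powr (-p)"
  have Cqp: "Cq > 0" using Yp by (simp add: Cq_def)
  define A where "A = Cq * \<rho> powr (-b)"
  have A: "A > 0" using Cqp \<rho> by (simp add: A_def)
  have \<kappa>: "1/(q-1) - A powr (q-1) * (2*(q/(q-1))) powr q * \<rho> powr q > 0"
  proof -
    have "A powr (q-1) = Cq powr (q-1) * \<rho> powr (-b*(q-1))"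
      using Cqp \<rho> by (simp add: A_def powr_mult powr_powr)
    also have "Cq powr (q-1) = 1 / Y"
    proof -
      have "Cq powr (q-1) = Y powr (-p*(q-1))" by (simp add: Cq_def powr_powr)
      also have "-p*(q-1) = -1" using q by (simp add: p_def)
      finally show ?thesis using Yp by (simp add: powr_minus_divide)
    qed
    also have "-b*(q-1) = -q" using q by (simp add: b_def)
    finally have Ae: "A powr (q-1) = \<rho> powr (-q) / Y" by simp
    have "A powr (q-1) * (2*b) powr q * \<rho> powr q = (2*b) powr q / Y * (\<rho> powr (-q) * \<rho> powr q)"
      by (simp add: Ae)
    also have "\<rho> powr (-q) * \<rho> powr q = 1" using \<rho> by (simp add: powr_minus)
    also have "(2*b) powr q / Y = p * (2/(1+b)) powr q"
    proof -
      have "(2*b) powr q / Y = ((2*b) powr q / (b*(1+b)) powr q) / (q-1)" by (simp add: Y_def)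
      also have "(2*b) powr q / (b*(1+b)) powr q = (2*b/(b*(1+b))) powr q"
        by (rule powr_divide[symmetric])
      also have "2*b/(b*(1+b)) = 2/(1+b)" using bp by simp
      finally show ?thesis by (simp add: p_def)
    qed
    finally have X: "A powr (q-1) * (2*b) powr q * \<rho> powr q = p * (2/(1+b)) powr q" by simp
    have "(2/(1+b)) powr q < 1 powr q"
      using b1 q by (intro powr_less_mono2) auto
    then have "p * (2/(1+b)) powr q < p" using pp by simp
    then show ?thesis using X by (simp add: b_def p_def)
  qed
  define C1 where "C1 = A * (3/4 * \<rho>\<^sup>2) powr b"
  have C1: "C1 > 0" using A \<rho> by (simp add: C1_def)
  show ?thesis
  proof (intro exI[of _ C1] conjI C1 allI impI)
    fix \<Omega> :: "(real^'n) set" and T :: ereal and u :: "real^'n \<Rightarrow> real \<Rightarrow> real" and x0 :: "real^'n"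
    assume H: "open \<Omega> \<and> connected \<Omega> \<and> T > 0 \<and>
      classical_solution_E q \<Omega> T u \<and>
      (\<forall>(x,t) \<in> Qcyl \<Omega> T. u x t \<ge> 0) \<and>
      cball x0 \<rho> \<subseteq> \<Omega> \<and>
      (\<forall>M. eventually (\<lambda>t. \<forall>x \<in> ball x0 \<rho>. u x t \<ge> M) (at_right 0))"
    have lb: "Liminf (at_right 0) (\<lambda>t. ereal (t powr (1/(q-1)) * u x t)) \<ge> ereal (psi q \<rho> A x0 x)"
      if x: "x \<in> ball x0 \<rho>" for x
    proof (rule Liminf_bounded)
      have "eventually (\<lambda>t. psi q \<rho> A x0 x \<le> t powr (1/(q-1)) * u x t) (at_right 0)"
        using main_bound[OF _ _ _ q \<rho> A _ \<kappa> _ x] H by blast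
      then show "eventually (\<lambda>t. ereal (psi q \<rho> A x0 x) \<le> ereal (t powr (1/(q-1)) * u x t)) (at_right 0)"
        by simp
    qed
    show "\<forall>x \<in> ball x0 (\<rho>/2). Liminf (at_right 0) (\<lambda>t. ereal (t powr (1/(q-1)) * u x t)) \<ge> ereal C1"
    proof
      fix x assume x: "x \<in> ball x0 (\<rho>/2)"
      then have xb: "x \<in> ball x0 \<rho>" using \<rho> by auto
      have "dist x0 x < \<rho>/2" using x by simp
      then have "(norm (x - x0))\<^sup>2 \<le> (\<rho>/2)\<^sup>2"
        by (intro power_mono) (auto simp: dist_norm norm_minus_commute)
      then have g: "3/4 * \<rho>\<^sup>2 \<le> gfun \<rho> x0 x" by (simp add: gfun_def power_divide)
      have "C1 \<le> psi q \<rho> A x0 x"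
        unfolding C1_def psi_def b_def[symmetric] using A bp g \<rho>
        by (intro mult_left_mono powr_mono2) auto
      then have "ereal C1 \<le> ereal (psi q \<rho> A x0 x)" by simp
      then show "Liminf (at_right 0) (\<lambda>t. ereal (t powr (1/(q-1)) * u x t)) \<ge> ereal C1"
        using lb[OF xb] by (rule order.trans)
    qed
    have x0b: "x0 \<in> ball x0 \<rho>" using \<rho> by simp
    have "psi q \<rho> A x0 x0 = Cq * \<rho> powr b"
    proof -
      have "psi q \<rho> A x0 x0 = A * (\<rho>\<^sup>2) powr b" by (simp add: psi_def gfun_def b_def)
      also have "(\<rho>\<^sup>2) powr b = \<rho> powr (2*b)" using \<rho> by (simp add: powr_powr[symmetric] powr_numeral)
      also have "A * \<rho> powr (2*b) = Cq * (\<rho> powr (-b) * \<rho> powr (2*b))" by (simp add: A_def)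
      also have "\<rho> powr (-b) * \<rho> powr (2*b) = \<rho> powr b" by (simp add: powr_add[symmetric])
      finally show ?thesis .
    qed
    then show "Liminf (at_right 0) (\<lambda>t. ereal (t powr (1/(q-1)) * u x0 t))
      \<ge> ereal (((((q/(q-1)) * (1 + q/(q-1))) powr q * (q-1)) powr (-(1/(q-1)))) * \<rho> powr (q/(q-1)))"
      using lb[OF x0b] by (simp add: Cq_def Y_def b_def p_def)
  qed
qed


end
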